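(* Let $\mathbf{S}\in\mathbb{R}^{N\times N}$ be a spatial graph shift operator and $\mathbf{S}_T\in\mathbb{R}^{T\times T}$ a temporal graph shift operator. For a matrix $\mathbf{X}\in\mathbb{R}^{N\times T}$ let $\mathbf{x}_\diamond=\mathrm{vec}(\mathbf{X})\in\mathbb{R}^{NT}$. Let $\Phi(\,\cdot\,;\mathcal{H}(\mathbf{S}_T,\mathbf{S}))$ be a graph-time convolutional neural network (defined in the context) built with filters $\mathbf{H}^{fg}_\ell(\mathbf{S},\mathbf{S}_T)=\sum_{k=0}^{\bar K}\sum_{l=0}^{\tilde K}h^{fg}_{kl\ell}(\mathbf{S}_T^{\,l}\otimes\mathbf{S}^k)$ and a pointwise nonlinearity $\sigma$. Then for every permutation matrix $\mathbf{P}$ in $$\mathcal{P}=\{\mathbf{P}\in\{0,1\}^{N\times N}:\ \mathbf{P}\mathbf{1}=\mathbf{1},\ \mathbf{P}^\top\mathbf{1}=\mathbf{1}\}$$ it holds that $$\mathbf{P}^\top\,\mathrm{vec}^{-1}\!\big(\Phi(\mathrm{vec}(\mathbf{X});\mathcal{H}(\mathbf{S}_T,\mathbf{S}))\big)=\mathrm{vec}^{-1}\!\big(\Phi(\mathrm{vec}(\mathbf{P}^\top\mathbf{X});\mathcal{H}(\mathbf{S}_T,\mathbf{P}^\top\mathbf{S}\mathbf{P}))\big).$$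
   Context: $\mathrm{vec}$ stacks the columns of an $N\times T$ matrix into a vector of length $NT$ (entry $(i,t)$ goes to position $N(t-1)+i$), and $\mathrm{vec}^{-1}$ is its inverse. $\otimes$ is the Kronecker product. Graph-time convolutional neural network (GTCNN): fix $L\ge1$ layers and feature counts $F_0=1$, $F_1=\dots=F_{L-1}=F$, $F_L=1$. Set $\mathbf{x}^1_{\diamond,0}=\mathbf{x}_\diamond$. For $\ell=1,\dots,L$ and $f=1,\dots,F_\ell$, $$\mathbf{x}^f_{\diamond,\ell}=\sigma\Big(\sum_{g=1}^{F_{\ell-1}}\mathbf{H}^{fg}_\ell(\mathbf{S},\mathbf{S}_T)\,\mathbf{x}^g_{\diamond,\ell-1}\Big),$$ where $\sigma:\mathbb{R}\to\mathbb{R}$ is applied entrywise and $\mathbf{H}^{fg}_\ell(\mathbf{S},\mathbf{S}_T)=\sum_{k=0}^{\bar K}\sum_{l=0}^{\tilde K}h^{fg}_{kl\ell}(\mathbf{S}_T^{\,l}\otimes\mathbf{S}^k)$ with fixed scalar coefficients. The filter tensor is $\mathcal{H}(\mathbf{S}_T,\mathbf{S})=\{\mathbf{H}^{fg}_\ell(\mathbf{S},\mathbf{S}_T)\}_{\ell fg}$ and the GTCNN output is $\Phi(\mathbf{x}_\diamond;\mathcal{H}(\mathbf{S}_T,\mathbf{S}))=\mathbf{x}^1_{\diamond,L}\in\mathbb{R}^{NT}$. $\mathcal{H}(\mathbf{S}_T,\mathbf{P}^\top\mathbf{S}\mathbf{P})$ denotes the same filter tensor (same coefficients) with $\mathbf{S}$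 replaced by $\mathbf{P}^\top\mathbf{S}\mathbf{P}$. *)

theory Defs
  imports "Jordan_Normal_Form.Matrix"
begin

text \<open>Indices are 0-based: entry (i,t) of an N x T matrix goes to position N*t + i.\<close>

definition vec_op :: "real mat \<Rightarrow> real vec" where
  "vec_op X = vec (dim_row X * dim_col X) (\<lambda>p. X $$ (p mod dim_row X, p div dim_row X))"

definition vec_inv :: "nat \<Rightarrow> nat \<Rightarrow> real vec \<Rightarrow> real mat" where
  "vec_inv N T x = mat N T (\<lambda>(i, t). x $ (N * t + i))"

definition kron :: "real mat \<Rightarrow> real mat \<Rightarrow> real mat" where
  "kron A B = mat (dim_row A * dim_row B) (dim_col A * dim_col B)
     (\<lambda>(p, q). A $$ (p div dim_row B, q div dim_col B) * B $$ (p mod dim_row B, q mod dim_col B))"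

definition ones_vec :: "nat \<Rightarrow> real vec" where
  "ones_vec n = vec n (\<lambda>_. 1)"

definition perm_mats :: "nat \<Rightarrow> real mat set" where
  "perm_mats N = {P. P \<in> carrier_mat N N \<and> (\<forall>i<N. \<forall>j<N. P $$ (i, j) \<in> {0, 1})
     \<and> P *\<^sub>v ones_vec N = ones_vec N \<and> transpose_mat P *\<^sub>v ones_vec N = ones_vec N}"

definition gt_filter :: "nat \<Rightarrow> nat \<Rightarrow> (nat \<Rightarrow> nat \<Rightarrow> real) \<Rightarrow> real mat \<Rightarrow> real mat \<Rightarrow> real vec \<Rightarrow> real vec" where
  "gt_filter Kb Kt c S ST x = vec (dim_row ST * dim_row S)
     (\<lambda>p. \<Sum>k\<le>Kb. \<Sum>l\<le>Kt. c k l * ((kron (ST ^\<^sub>m l) (S ^\<^sub>m k)) *\<^sub>v x) $ p)"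

definition feat :: "nat \<Rightarrow> nat \<Rightarrow> nat \<Rightarrow> nat" where
  "feat L F l = (if l = 0 \<or> l = L then 1 else F)"

text \<open>Layer outputs: gtcnn_layer ... l f = x^{f+1}_{\<diamond>,l} (features 0-based).
  Coefficients h l f g k k' correspond to h^{(f+1)(g+1)}_{k k' l}.\<close>
fun gtcnn_layer :: "nat \<Rightarrow> nat \<Rightarrow> nat \<Rightarrow> nat \<Rightarrow> (nat \<Rightarrow> nat \<Rightarrow> nat \<Rightarrow> nat \<Rightarrow> nat \<Rightarrow> real)
    \<Rightarrow> (real \<Rightarrow> real) \<Rightarrow> real mat \<Rightarrow> real mat \<Rightarrow> real vec \<Rightarrow> nat \<Rightarrow> nat \<Rightarrow> real vec" where
  "gtcnn_layer L F Kb Kt h \<sigma> S ST x 0 = (\<lambda>f. x)"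
| "gtcnn_layer L F Kb Kt h \<sigma> S ST x (Suc l) = (\<lambda>f.
     map_vec \<sigma> (vec (dim_row ST * dim_row S) (\<lambda>p. \<Sum>g<feat L F l.
        gt_filter Kb Kt (h (Suc l) f g) S ST (gtcnn_layer L F Kb Kt h \<sigma> S ST x l g) $ p)))"

definition gtcnn :: "nat \<Rightarrow> nat \<Rightarrow> nat \<Rightarrow> nat \<Rightarrow> (nat \<Rightarrow> nat \<Rightarrow> nat \<Rightarrow> nat \<Rightarrow> nat \<Rightarrow> real)
    \<Rightarrow> (real \<Rightarrow> real) \<Rightarrow> real mat \<Rightarrow> real mat \<Rightarrow> real vec \<Rightarrow> real vec" where
  "gtcnn L F Kb Kt h \<sigma> S ST x = gtcnn_layer L F Kb Kt h \<sigma> S ST x L 0"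

end

theory Submission imports Defs begin

definition pvec :: "(nat \<Rightarrow> nat) \<Rightarrow> real vec \<Rightarrow> real vec" where
 "pvec \<rho> x = vec (dim_vec x) (\<lambda>p. x $ \<rho> p)"

definition pmat :: "nat \<Rightarrow> (nat \<Rightarrow> nat) \<Rightarrow> real mat \<Rightarrow> real mat" where
 "pmat N \<pi> M = mat N N (\<lambda>(i,j). M $$ (\<pi> i, \<pi> j))"

lemma mult_pvec:
 assumes bij: "bij_betw \<rho> {..<n} {..<n}" and M: "M \<in> carrier_mat n n" and M': "M' \<in> carrier_mat n n"
 and ent: "\<And>p q. p<n \<Longrightarrow> q<n \<Longrightarrow> M' $$ (p,q) = M $$ (\<rho> p, \<rho> q)" and x: "dim_vec x = n"
 shows "M' *\<^sub>v pvec \<rho> x = pvec \<rho> (M *\<^sub>v x)"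
proof (rule eq_vecI)
 show "dim_vec (M' *\<^sub>v pvec \<rho> x) = dim_vec (pvec \<rho> (M *\<^sub>v x))" using M M' by (simp add: pvec_def)
 fix p assume "p < dim_vec (pvec \<rho> (M *\<^sub>v x))"
 hence p: "p < n" using M by (simp add: pvec_def)
 have rp: "\<rho> p < n" using bij p by (auto simp: bij_betw_def)
 have "(M' *\<^sub>v pvec \<rho> x) $ p = (\<Sum>q<n. M $$ (\<rho> p, \<rho> q) * x $ \<rho> q)"
   using M M' p x by (auto simp add: pvec_def scalar_prod_def ent lessThan_atLeast0 intro!: sum.cong)
 also have "... = (\<Sum>q<n. M $$ (\<rho> p, q) * x $ q)"
   using sum.reindex_bij_betw[OF bij, of "\<lambda>q. M $$ (\<rho> p, q) * x $ q"] by simp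
 also have "... = pvec \<rho> (M *\<^sub>v x) $ p" using M p rp x
   by (auto simp add: pvec_def scalar_prod_def lessThan_atLeast0 intro!: sum.cong)
 finally show "(M' *\<^sub>v pvec \<rho> x) $ p = pvec \<rho> (M *\<^sub>v x) $ p" .
qed

lemma pmat_carrier[simp]: "pmat N \<pi> M \<in> carrier_mat N N" "dim_row (pmat N \<pi> M) = N" "dim_col (pmat N \<pi> M) = N"
  by (auto simp: pmat_def)

lemma pmat_index[simp]: "i < N \<Longrightarrow> j < N \<Longrightarrow> pmat N \<pi> M $$ (i,j) = M $$ (\<pi> i, \<pi> j)"
  by (simp add: pmat_def)

lemma pmat_mult:
  assumes bij: "bij_betw \<pi> {..<N} {..<N}" and A: "A \<in> carrier_mat N N" and B: "B \<in> carrier_mat N N"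
  shows "pmat N \<pi> (A * B) = pmat N \<pi> A * pmat N \<pi> B"
proof (rule eq_matI)
  fix i j assume i: "i < dim_row (pmat N \<pi> A * pmat N \<pi> B)" and j: "j < dim_col (pmat N \<pi> A * pmat N \<pi> B)"
  hence i: "i < N" and j: "j < N" by auto
  have pi: "\<pi> i < N" "\<pi> j < N" using bij i j by (auto simp: bij_betw_def)
  have "(pmat N \<pi> A * pmat N \<pi> B) $$ (i,j) = (\<Sum>q<N. A $$ (\<pi> i, \<pi> q) * B $$ (\<pi> q, \<pi> j))"
    using i j by (auto simp add: scalar_prod_def lessThan_atLeast0 intro!: sum.cong)
  also have "... = (\<Sum>q<N. A $$ (\<pi> i, q) * B $$ (q, \<pi> j))"
    using sum.reindex_bij_betw[OF bij, of "\<lambda>q. A $$ (\<pi> i, q) * B $$ (q, \<pi> j)"] by simp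
  also have "... = pmat N \<pi> (A * B) $$ (i,j)" using A B i j pi
    by (auto simp add: scalar_prod_def lessThan_atLeast0 intro!: sum.cong)
  finally show "pmat N \<pi> (A * B) $$ (i,j) = (pmat N \<pi> A * pmat N \<pi> B) $$ (i,j)" by simp
qed auto

lemma pmat_one:
  assumes bij: "bij_betw \<pi> {..<N} {..<N}"
  shows "pmat N \<pi> (1\<^sub>m N) = 1\<^sub>m N"
proof (rule eq_matI)
  fix i j assume "i < dim_row (1\<^sub>m N :: real mat)" "j < dim_col (1\<^sub>m N :: real mat)"
  hence i: "i < N" and j: "j < N" by auto
  have pi: "\<pi> i < N" "\<pi> j < N" using bij i j by (auto simp: bij_betw_def)
  have "(\<pi> i = \<pi> j) = (i = j)" using bij i j by (auto simp: bij_betw_def inj_on_def)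
  thus "pmat N \<pi> (1\<^sub>m N) $$ (i,j) = (1\<^sub>m N :: real mat) $$ (i,j)" using i j pi by simp
qed auto

lemma pmat_pow:
  assumes bij: "bij_betw \<pi> {..<N} {..<N}" and A: "A \<in> carrier_mat N N"
  shows "pmat N \<pi> A ^\<^sub>m k = pmat N \<pi> (A ^\<^sub>m k)"
proof (induction k)
  case 0 then show ?case using A pmat_one[OF bij] by simp
next
  case (Suc k) then show ?case using pmat_mult[OF bij, of "A ^\<^sub>m k" A] A by simp
qed

lemma unique_one:
  fixes f :: "nat \<Rightarrow> real"
  assumes "\<forall>j<N. f j \<in> {0,1}" and "(\<Sum>j<N. f j) = 1"
  shows "\<exists>j. {j'. j' < N \<and> f j' = 1} = {j}"
proof -
  have "(\<Sum>j<N. f j) = (\<Sum>j<N. if f j = 1 then 1 else 0)"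
    using assms(1) by (intro sum.cong) auto
  also have "... = real (card {j'. j' < N \<and> f j' = 1})"
    by (simp add: sum.If_cases lessThan_def Collect_conj_eq Int_commute)
  finally have "card {j'. j' < N \<and> f j' = 1} = 1" using assms(2) by simp
  thus ?thesis by (simp add: card_1_singleton_iff)
qed

lemma perm_fun:
  assumes P: "P \<in> perm_mats N"
  shows "\<exists>\<pi>. bij_betw \<pi> {..<N} {..<N} \<and> (\<forall>i<N. \<forall>j<N. P $$ (j,i) = (if j = \<pi> i then 1 else 0))"
proof -
  have Pc: "P \<in> carrier_mat N N" and P01: "\<forall>i<N. \<forall>j<N. P $$ (i, j) \<in> {0, 1}"
    and r: "P *\<^sub>v ones_vec N = ones_vec N" and c: "transpose_mat P *\<^sub>v ones_vec N = ones_vec N"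
    using P by (auto simp: perm_mats_def)
  have col: "\<exists>j. {j'. j' < N \<and> P $$ (j',i) = 1} = {j}" if i: "i < N" for i
  proof (rule unique_one)
    show "\<forall>j<N. P $$ (j,i) \<in> {0,1}" using P01 i by auto
    have "(transpose_mat P *\<^sub>v ones_vec N) $ i = 1" using c i by (simp add: ones_vec_def)
    thus "(\<Sum>j<N. P $$ (j,i)) = 1" using i Pc
      by (auto simp: scalar_prod_def ones_vec_def lessThan_atLeast0 intro!: sum.cong)
  qed
  have row: "\<exists>i. {i'. i' < N \<and> P $$ (j,i') = 1} = {i}" if j: "j < N" for j
  proof (rule unique_one)
    show "\<forall>i<N. P $$ (j,i) \<in> {0,1}" using P01 j by auto
    have "(P *\<^sub>v ones_vec N) $ j = 1" using r j by (simp add: ones_vec_def)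
    thus "(\<Sum>i<N. P $$ (j,i)) = 1" using j Pc
      by (auto simp: scalar_prod_def ones_vec_def lessThan_atLeast0 intro!: sum.cong)
  qed
  define \<pi> where "\<pi> i = (SOME j. {j'. j' < N \<and> P $$ (j',i) = 1} = {j})" for i
  have pi: "{j'. j' < N \<and> P $$ (j',i) = 1} = {\<pi> i}" if "i < N" for i
    unfolding \<pi>_def using someI_ex[OF col[OF that]] .
  have piN: "\<pi> i < N" if "i < N" for i using pi[OF that] by blast
  have ent: "P $$ (j,i) = (if j = \<pi> i then 1 else 0)" if "i < N" "j < N" for i j
    using pi[OF that(1)] P01 that by (auto split: if_splits)
  have inj: "inj_on \<pi> {..<N}"
  proof (rule inj_onI)
    fix a b assume a: "a \<in> {..<N}" and b: "b \<in> {..<N}" and e: "\<pi> a = \<pi> b"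
    obtain i where "{i'. i' < N \<and> P $$ (\<pi> a,i') = 1} = {i}" using row piN a by blast
    moreover have "P $$ (\<pi> a, a) = 1" "P $$ (\<pi> a, b) = 1" using ent a b e piN by auto
    ultimately have "a \<in> {i}" "b \<in> {i}" using a b by (auto simp del: singleton_iff)
    thus "a = b" by simp
  qed
  have "\<pi> ` {..<N} = {..<N}" using endo_inj_surj[of "{..<N}" \<pi>] inj piN by auto
  hence "bij_betw \<pi> {..<N} {..<N}" using inj by (simp add: bij_betw_def)
  thus ?thesis using ent by blast
qed

definition rho :: "nat \<Rightarrow> (nat \<Rightarrow> nat) \<Rightarrow> nat \<Rightarrow> nat" where
  "rho N \<pi> p = N * (p div N) + \<pi> (p mod N)"

lemma rho_props:
  assumes bij: "bij_betw \<pi> {..<N} {..<N}" and p: "p < N * T"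
  shows "rho N \<pi> p div N = p div N" "rho N \<pi> p mod N = \<pi> (p mod N)" "rho N \<pi> p < N * T"
proof -
  have N: "N > 0" using p by (cases N) auto
  have pm: "\<pi> (p mod N) < N" using bij N by (auto simp: bij_betw_def)
  show 1: "rho N \<pi> p div N = p div N" using pm by (simp add: rho_def)
  show "rho N \<pi> p mod N = \<pi> (p mod N)" using pm by (simp add: rho_def)
  have "p div N < T" using p by (simp add: less_mult_imp_div_less mult.commute)
  hence "p div N + 1 \<le> T" by simp
  hence "N * (p div N) + N \<le> N * T" by (metis distrib_left mult.right_neutral mult_le_mono2)
  thus "rho N \<pi> p < N * T" using pm by (simp add: rho_def)
qed

lemma rho_bij:
  assumes bij: "bij_betw \<pi> {..<N} {..<N}"
  shows "bij_betw (rho N \<pi>) {..<N*T} {..<N*T}"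
proof -
  have inj: "inj_on (rho N \<pi>) {..<N*T}"
  proof (rule inj_onI)
    fix a b assume a: "a \<in> {..<N*T}" and b: "b \<in> {..<N*T}" and e: "rho N \<pi> a = rho N \<pi> b"
    have "a div N = b div N" using rho_props(1)[OF bij, of a T] rho_props(1)[OF bij, of b T] a b e by auto
    moreover have "\<pi> (a mod N) = \<pi> (b mod N)" using rho_props(2)[OF bij, of a T] rho_props(2)[OF bij, of b T] a b e by auto
    moreover have N: "N > 0" using a by (cases N) auto
    ultimately have "a mod N = b mod N" using bij by (auto simp: bij_betw_def inj_on_def)
    thus "a = b" using \<open>a div N = b div N\<close> by (metis div_mult_mod_eq)
  qed
  have "rho N \<pi> ` {..<N*T} \<subseteq> {..<N*T}" using rho_props(3)[OF bij] by auto
  hence "rho N \<pi> ` {..<N*T} = {..<N*T}" using endo_inj_surj[of "{..<N*T}"] inj by auto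
  thus ?thesis using inj by (simp add: bij_betw_def)
qed

lemma kron_pmat:
  assumes bij: "bij_betw \<pi> {..<N} {..<N}" and A: "A \<in> carrier_mat T T" and B: "B \<in> carrier_mat N N"
    and p: "p < N * T" and q: "q < N * T"
  shows "kron A (pmat N \<pi> B) $$ (p,q) = kron A B $$ (rho N \<pi> p, rho N \<pi> q)"
proof -
  have N: "N > 0" using p by (cases N) auto
  show ?thesis using A B p q rho_props[OF bij p] rho_props[OF bij q] N
  by (simp add: kron_def mult.commute)
qed

lemma filter_pvec:
  assumes bij: "bij_betw \<pi> {..<N} {..<N}" and S: "S \<in> carrier_mat N N" and ST: "ST \<in> carrier_mat T T"
    and y: "dim_vec y = N * T"
  shows "gt_filter Kb Kt c (pmat N \<pi> S) ST (pvec (rho N \<pi>) y) = pvec (rho N \<pi>) (gt_filter Kb Kt c S ST y)"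
proof (rule eq_vecI)
  show "dim_vec (gt_filter Kb Kt c (pmat N \<pi> S) ST (pvec (rho N \<pi>) y)) = dim_vec (pvec (rho N \<pi>) (gt_filter Kb Kt c S ST y))"
    using S ST by (simp add: gt_filter_def pvec_def)
  fix p assume "p < dim_vec (pvec (rho N \<pi>) (gt_filter Kb Kt c S ST y))"
  hence p: "p < N * T" using S ST by (simp add: gt_filter_def pvec_def mult.commute)
  have rp: "rho N \<pi> p < N * T" using rho_props[OF bij p] by simp
  have key: "kron (ST ^\<^sub>m l) (pmat N \<pi> S ^\<^sub>m k) *\<^sub>v pvec (rho N \<pi>) y
      = pvec (rho N \<pi>) (kron (ST ^\<^sub>m l) (S ^\<^sub>m k) *\<^sub>v y)" for k l
  proof -
    have "pmat N \<pi> S ^\<^sub>m k = pmat N \<pi> (S ^\<^sub>m k)" using pmat_pow[OF bij S] .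
    moreover have "kron (ST ^\<^sub>m l) (pmat N \<pi> (S ^\<^sub>m k)) *\<^sub>v pvec (rho N \<pi>) y
      = pvec (rho N \<pi>) (kron (ST ^\<^sub>m l) (S ^\<^sub>m k) *\<^sub>v y)"
    proof (rule mult_pvec[OF rho_bij[OF bij]])
      show "kron (ST ^\<^sub>m l) (S ^\<^sub>m k) \<in> carrier_mat (N*T) (N*T)" using S ST by (simp add: kron_def mult.commute)
      show "kron (ST ^\<^sub>m l) (pmat N \<pi> (S ^\<^sub>m k)) \<in> carrier_mat (N*T) (N*T)" using S ST by (simp add: kron_def mult.commute)
      show "dim_vec y = N * T" by fact
      fix p q assume "p < N * T" "q < N * T"
      thus "kron (ST ^\<^sub>m l) (pmat N \<pi> (S ^\<^sub>m k)) $$ (p, q) = kron (ST ^\<^sub>m l) (S ^\<^sub>m k) $$ (rho N \<pi> p, rho N \<pi> q)"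
        using kron_pmat[OF bij, of "ST ^\<^sub>m l" T "S ^\<^sub>m k"] S ST by simp
    qed
    ultimately show ?thesis by simp
  qed
  have dk: "dim_vec (kron (ST ^\<^sub>m l) (S ^\<^sub>m k) *\<^sub>v y) = N * T" for k l using S ST by (simp add: kron_def mult.commute)
  show "gt_filter Kb Kt c (pmat N \<pi> S) ST (pvec (rho N \<pi>) y) $ p = pvec (rho N \<pi>) (gt_filter Kb Kt c S ST y) $ p"
  proof -
    have "gt_filter Kb Kt c (pmat N \<pi> S) ST (pvec (rho N \<pi>) y) $ p =
       (\<Sum>k\<le>Kb. \<Sum>l\<le>Kt. c k l * pvec (rho N \<pi>) (kron (ST ^\<^sub>m l) (S ^\<^sub>m k) *\<^sub>v y) $ p)"
      using p S ST by (simp add: gt_filter_def key mult.commute)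
    also have "... = pvec (rho N \<pi>) (gt_filter Kb Kt c S ST y) $ p"
      using p rp S ST dk by (simp add: gt_filter_def pvec_def mult.commute)
    finally show ?thesis .
  qed
qed

lemma layer_pvec:
  assumes bij: "bij_betw \<pi> {..<N} {..<N}" and S: "S \<in> carrier_mat N N" and ST: "ST \<in> carrier_mat T T"
    and x: "dim_vec x = N * T"
  shows "\<forall>f. gtcnn_layer L F Kb Kt h \<sigma> (pmat N \<pi> S) ST (pvec (rho N \<pi>) x) l f
      = pvec (rho N \<pi>) (gtcnn_layer L F Kb Kt h \<sigma> S ST x l f)
     \<and> dim_vec (gtcnn_layer L F Kb Kt h \<sigma> S ST x l f) = N * T"
proof (induction l)
  case 0 then show ?case using x by simp
next
  case (Suc l)
  show ?case
  proof
    fix f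
    let ?y = "\<lambda>g. gtcnn_layer L F Kb Kt h \<sigma> S ST x l g"
    have IH: "\<And>g. gtcnn_layer L F Kb Kt h \<sigma> (pmat N \<pi> S) ST (pvec (rho N \<pi>) x) l g = pvec (rho N \<pi>) (?y g)"
      and dy: "\<And>g. dim_vec (?y g) = N * T" using Suc by auto
    have fl: "\<And>g. gt_filter Kb Kt (h (Suc l) f g) (pmat N \<pi> S) ST (pvec (rho N \<pi>) (?y g))
       = pvec (rho N \<pi>) (gt_filter Kb Kt (h (Suc l) f g) S ST (?y g))"
      using filter_pvec[OF bij S ST dy] .
    have dg: "\<And>g. dim_vec (gt_filter Kb Kt (h (Suc l) f g) S ST (?y g)) = N * T"
      using S ST by (simp add: gt_filter_def mult.commute)
    have "gtcnn_layer L F Kb Kt h \<sigma> (pmat N \<pi> S) ST (pvec (rho N \<pi>) x) (Suc l) f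
      = map_vec \<sigma> (vec (N * T) (\<lambda>p. \<Sum>g<feat L F l.
           pvec (rho N \<pi>) (gt_filter Kb Kt (h (Suc l) f g) S ST (?y g)) $ p))"
      using ST by (simp add: IH fl mult.commute)
    also have "... = pvec (rho N \<pi>) (gtcnn_layer L F Kb Kt h \<sigma> S ST x (Suc l) f)"
    proof (rule eq_vecI)
      fix p assume "p < dim_vec (pvec (rho N \<pi>) (gtcnn_layer L F Kb Kt h \<sigma> S ST x (Suc l) f))"
      hence p: "p < N * T" using S ST by (simp add: pvec_def mult.commute)
      have rp: "rho N \<pi> p < N * T" using rho_props(3)[OF bij p] .
      show "map_vec \<sigma> (vec (N * T) (\<lambda>p. \<Sum>g<feat L F l.
           pvec (rho N \<pi>) (gt_filter Kb Kt (h (Suc l) f g) S ST (?y g)) $ p)) $ p =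
          pvec (rho N \<pi>) (gtcnn_layer L F Kb Kt h \<sigma> S ST x (Suc l) f) $ p"
        using p rp S ST dg by (simp add: pvec_def mult.commute)
    qed (use S ST in \<open>simp add: pvec_def mult.commute\<close>)
    finally show "gtcnn_layer L F Kb Kt h \<sigma> (pmat N \<pi> S) ST (pvec (rho N \<pi>) x) (Suc l) f
      = pvec (rho N \<pi>) (gtcnn_layer L F Kb Kt h \<sigma> S ST x (Suc l) f)
     \<and> dim_vec (gtcnn_layer L F Kb Kt h \<sigma> S ST x (Suc l) f) = N * T"
      using S ST by (simp add: mult.commute)
  qed
qed

lemma delta_sum1: "(k::nat) < N \<Longrightarrow> (\<Sum>a\<in>{0..<N}. (if a = k then 1 else 0) * (f a :: real)) = f k"
  by (simp add: if_distrib[of "\<lambda>c. c * _"] sum.delta cong: if_cong)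

lemma delta_sum2: "(k::nat) < N \<Longrightarrow> (\<Sum>a\<in>{0..<N}. (f a :: real) * (if a = k then 1 else 0)) = f k"
  using delta_sum1[of k N f] by (simp add: mult.commute)

theorem proposition2:
  fixes N T L F Kb Kt :: nat
    and h :: "nat \<Rightarrow> nat \<Rightarrow> nat \<Rightarrow> nat \<Rightarrow> nat \<Rightarrow> real"
    and \<sigma> :: "real \<Rightarrow> real"
    and S ST X P :: "real mat"
  assumes "L \<ge> 1"
    and "S \<in> carrier_mat N N"
    and "ST \<in> carrier_mat T T"
    and "X \<in> carrier_mat N T"
    and "P \<in> perm_mats N"
  shows "transpose_mat P * vec_inv N T (gtcnn L F Kb Kt h \<sigma> S ST (vec_op X))
       = vec_inv N T (gtcnn L F Kb Kt h \<sigma> (transpose_mat P * S * P) ST (vec_op (transpose_mat P * X)))"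
proof -
  note S = assms(2) and ST = assms(3) and X = assms(4)
  have Pc: "P \<in> carrier_mat N N" using assms(5) by (simp add: perm_mats_def)
  obtain \<pi> where bij: "bij_betw \<pi> {..<N} {..<N}"
    and ent: "\<And>i j. i < N \<Longrightarrow> j < N \<Longrightarrow> P $$ (j,i) = (if j = \<pi> i then 1 else 0)"
    using perm_fun[OF assms(5)] by blast
  have piN: "\<And>i. i < N \<Longrightarrow> \<pi> i < N" using bij by (auto simp: bij_betw_def)
  have PtM: "(transpose_mat P * M) $$ (i,j) = M $$ (\<pi> i, j)"
    if M: "M \<in> carrier_mat N n" and i: "i < N" and j: "j < n" for M n i j
  proof -
    have "(transpose_mat P * M) $$ (i,j) = (\<Sum>a\<in>{0..<N}. row (transpose_mat P) i $ a * col M j $ a)"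
      using M Pc i j by (simp add: scalar_prod_def)
    also have "... = (\<Sum>a\<in>{0..<N}. (if a = \<pi> i then 1 else 0) * M $$ (a,j))"
      using M Pc i j ent by (intro sum.cong) auto
    also have "... = M $$ (\<pi> i, j)" using piN[OF i] by (rule delta_sum1)
    finally show ?thesis .
  qed
  have MP: "(M * P) $$ (i,j) = M $$ (i, \<pi> j)"
    if M: "M \<in> carrier_mat n N" and i: "i < n" and j: "j < N" for M n i j
  proof -
    have "(M * P) $$ (i,j) = (\<Sum>a\<in>{0..<N}. row M i $ a * col P j $ a)"
      using M Pc i j by (simp add: scalar_prod_def)
    also have "... = (\<Sum>a\<in>{0..<N}. M $$ (i,a) * (if a = \<pi> j then 1 else 0))"
      using M Pc i j ent by (intro sum.cong) auto
    also have "... = M $$ (i, \<pi> j)" using piN[OF j] by (rule delta_sum2)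
    finally show ?thesis .
  qed
  have SP: "transpose_mat P * S * P = pmat N \<pi> S"
  proof (rule eq_matI)
    fix i j assume "i < dim_row (pmat N \<pi> S)" "j < dim_col (pmat N \<pi> S)"
    hence i: "i < N" and j: "j < N" by auto
    have "(transpose_mat P * S * P) $$ (i,j) = (transpose_mat P * S) $$ (i, \<pi> j)"
      using MP[of "transpose_mat P * S" N i j] Pc S i j by simp
    also have "... = S $$ (\<pi> i, \<pi> j)" using PtM[OF S i piN[OF j]] .
    finally show "(transpose_mat P * S * P) $$ (i,j) = pmat N \<pi> S $$ (i,j)" using i j by simp
  qed (use Pc S in auto)
  have VX: "vec_op (transpose_mat P * X) = pvec (rho N \<pi>) (vec_op X)"
  proof (rule eq_vecI)
    show "dim_vec (vec_op (transpose_mat P * X)) = dim_vec (pvec (rho N \<pi>) (vec_op X))"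
      using Pc X by (simp add: vec_op_def pvec_def)
    fix p assume "p < dim_vec (pvec (rho N \<pi>) (vec_op X))"
    hence p: "p < N * T" using X by (simp add: vec_op_def pvec_def)
    have N: "N > 0" using p by (cases N) auto
    have pd: "p div N < T" using p by (simp add: less_mult_imp_div_less mult.commute)
    show "vec_op (transpose_mat P * X) $ p = pvec (rho N \<pi>) (vec_op X) $ p"
      using p X Pc rho_props[OF bij p] PtM[OF X _ pd, of "p mod N"] N
      by (simp add: vec_op_def pvec_def)
  qed
  have dx: "dim_vec (vec_op X) = N * T" using X by (simp add: vec_op_def)
  have G: "gtcnn L F Kb Kt h \<sigma> (pmat N \<pi> S) ST (pvec (rho N \<pi>) (vec_op X))
      = pvec (rho N \<pi>) (gtcnn L F Kb Kt h \<sigma> S ST (vec_op X))"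
    and dG: "dim_vec (gtcnn L F Kb Kt h \<sigma> S ST (vec_op X)) = N * T"
    using layer_pvec[OF bij S ST dx, of L F Kb Kt h \<sigma> L] by (auto simp: gtcnn_def)
  have VI: "transpose_mat P * vec_inv N T y = vec_inv N T (pvec (rho N \<pi>) y)" if y: "dim_vec y = N * T" for y
  proof (rule eq_matI)
    fix i t assume "i < dim_row (vec_inv N T (pvec (rho N \<pi>) y))" "t < dim_col (vec_inv N T (pvec (rho N \<pi>) y))"
    hence i: "i < N" and t: "t < T" by (auto simp: vec_inv_def)
    have Vc: "vec_inv N T y \<in> carrier_mat N T" by (simp add: vec_inv_def)
    have lt: "N * t + i < N * T"
    proof -
      have "t + 1 \<le> T" using t by simp
      hence "N * t + N \<le> N * T" by (metis distrib_left mult.right_neutral mult_le_mono2)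
      thus ?thesis using i by simp
    qed
    have r: "rho N \<pi> (N * t + i) = N * t + \<pi> i" using i by (simp add: rho_def)
    show "(transpose_mat P * vec_inv N T y) $$ (i,t) = vec_inv N T (pvec (rho N \<pi>) y) $$ (i,t)"
      using PtM[OF Vc i t] i t piN[OF i] lt y r by (simp add: vec_inv_def pvec_def)
  qed (use Pc in \<open>auto simp: vec_inv_def\<close>)
  show ?thesis unfolding SP VX G using VI[OF dG] .
qed

end
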